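(* Let $m \ge 2$ be an integer, and let $k_m$ be a number with the following property: for every integer $k \ge k_m$ and every admissible $k$-tuple $\{g_jx + h_j\}_{j=1}^k$ of linear forms in $\mathbb{Z}[x]$ with $g_1,\ldots,g_k > 0$ and $\prod_{1 \le i < j \le k}(g_ih_j - g_jh_i) \ne 0$, the set $\{g_jn + h_j\}_{j=1}^k$ contains at least $m$ primes for infinitely many $n \in \mathbb{N}$. Let $k \ge k_m$ be an integer. Let $b_1,\ldots,b_k$ be distinct integers such that the $k$-tuple $\{x + b_j\}_{j=1}^k$ is admissible, and let $g$ be any positive integer coprime with $b_1 b_2\cdots b_k$. Then there is a subset $\{h_1,\ldots,h_m\} \subseteq \{b_1,\ldots,b_k\}$ (with $m$ elements) such that for infinitely many $n \in \mathbb{N}$, the numbers $gn + h_1,\ldots,gn + h_m$ are consecutive primes (i.e., they are all prime and, listed in increasing order, no other prime lies between any two of them).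
   Context: A $k$-tuple of linear forms $\{g_jx + h_j\}_{j=1}^k$ in $\mathbb{Z}[x]$ is called admissible if the polynomial $f(x) = \prod_{j=1}^k (g_jx + h_j)$ has no fixed prime divisor, i.e. for every prime $p$, $\#\{n \bmod p : f(n) \equiv 0 \bmod p\} < p$. (By the Maynard–Tao theorem, a number $k_m$ with the stated property exists for every $m \ge 2$; e.g. any $k_m$ with $k_m \log k_m > e^{8m+4}$ works.) *)

theory Defs
  imports "HOL-Computational_Algebra.Primes"
begin

text \<open>A k-tuple of linear forms g_j x + h_j (j < k) is encoded by two functions
  g h :: nat => int, restricted to indices j < k.\<close>

definition admissible :: "nat \<Rightarrow> (nat \<Rightarrow> int) \<Rightarrow> (nat \<Rightarrow> int) \<Rightarrow> bool" where
  "admissible k g h \<longleftrightarrow>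
     (\<forall>p::nat. prime p \<longrightarrow>
        card {r \<in> {0..<int p}. int p dvd (\<Prod>j<k. g j * r + h j)} < p)"

definition prime_values :: "nat \<Rightarrow> (nat \<Rightarrow> int) \<Rightarrow> (nat \<Rightarrow> int) \<Rightarrow> nat \<Rightarrow> int set" where
  "prime_values k g h n = {q. prime q \<and> q \<in> (\<lambda>j. g j * int n + h j) ` {..<k}}"

definition km_property :: "nat \<Rightarrow> nat \<Rightarrow> bool" where
  "km_property m km \<longleftrightarrow>
     (\<forall>k \<ge> km. \<forall>g h :: nat \<Rightarrow> int.
        admissible k g h \<and> (\<forall>j<k. g j > 0) \<and>
        (\<Prod>i<k. \<Prod>j\<in>{i<..<k}. g i * h j - g j * h i) \<noteq> 0
        \<longrightarrow> infinite {n::nat. m \<le> card (prime_values k g h n)})"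

definition consecutive_primes :: "int set \<Rightarrow> bool" where
  "consecutive_primes V \<longleftrightarrow>
     (\<forall>v\<in>V. prime v) \<and> (\<forall>q. prime q \<and> Min V \<le> q \<and> q \<le> Max V \<longrightarrow> q \<in> V)"

end

theory Submission imports Defs "HOL-Number_Theory.Cong" "HOL-Library.Infinite_Set" begin

lemma take_sorted_closed:
  "sorted_wrt (<) (xs::int list) \<Longrightarrow> c \<in> set xs \<Longrightarrow> h \<in> set (take m xs) \<Longrightarrow> c \<le> h \<Longrightarrow> c \<in> set (take m xs)"
proof (induction xs arbitrary: m)
  case Nil then show ?case by simp
next
  case (Cons a ys)
  show ?case
  proof (cases m)
    case 0 then show ?thesis using Cons by simp
  next
    case (Suc m')
    show ?thesis
    proof (cases "c = a")
      case True then show ?thesis using Suc by simp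
    next
      case False
      then have c: "c \<in> set ys" "a < c" using Cons.prems by auto
      then have "h \<noteq> a" using Cons.prems by auto
      then have "h \<in> set (take m' ys)" using Cons.prems Suc by auto
      then show ?thesis using Cons.IH[of m'] Cons.prems c Suc by auto
    qed
  qed
qed

lemma adm_shift:
  fixes G s :: int and b :: "nat \<Rightarrow> int"
  assumes adm: "admissible k (\<lambda>_. 1) b"
    and cond: "\<And>p::nat. prime p \<Longrightarrow> int p dvd G \<Longrightarrow> \<not> int p dvd (\<Prod>j<k. s + b j)"
  shows "admissible k (\<lambda>_. G) (\<lambda>j. s + b j)"
  unfolding admissible_def
proof (intro allI impI)
  fix p :: nat assume p: "prime p"
  then have pi: "prime (int p)" by (simp add: prime_nat_int_transfer)
  show "card {r \<in> {0..<int p}. int p dvd (\<Prod>j<k. G * r + (s + b j))} < p"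
  proof (cases "int p dvd G")
    case True
    have "{r \<in> {0..<int p}. int p dvd (\<Prod>j<k. G * r + (s + b j))} = {}"
    proof (rule ccontr)
      assume "{r \<in> {0..<int p}. int p dvd (\<Prod>j<k. G * r + (s + b j))} \<noteq> {}"
      then obtain r where "int p dvd (\<Prod>j<k. G * r + (s + b j))" by auto
      then obtain j where j: "j < k" "int p dvd G * r + (s + b j)"
        using prime_dvd_prod_iff[OF finite_lessThan pi] by auto
      then have "int p dvd s + b j" using True
        by (metis dvd_add_right_iff dvd_mult2)
      then have "int p dvd (\<Prod>j<k. s + b j)" using j(1)
        using prime_dvd_prod_iff[OF finite_lessThan pi] by auto
      then show False using cond[OF p True] by simp
    qed
    then show ?thesis using prime_gt_0_nat[OF p] by (metis card.empty)
  next
    case False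
    define f where "f x = (G * x + s) mod int p" for x
    have inj: "inj_on f {0..<int p}"
    proof
      fix x y assume xy: "x \<in> {0..<int p}" "y \<in> {0..<int p}" "f x = f y"
      then have "[G * x + s = G * y + s] (mod int p)" by (simp add: f_def cong_def)
      then have "[G * x = G * y] (mod int p)" by (simp add: cong_add_rcancel)
      then have "int p dvd G * (x - y)" by (simp add: cong_iff_dvd_diff right_diff_distrib)
      then have "int p dvd x - y" using False pi prime_dvd_mult_iff by blast
      moreover have "\<bar>x - y\<bar> < int p" using xy by auto
      ultimately show "x = y"
      proof -
        assume a: "int p dvd x - y" "\<bar>x - y\<bar> < int p"
        show "x = y"
        proof (rule ccontr)
          assume "x \<noteq> y"
          then have "x - y \<noteq> 0" by simp
          from dvd_imp_le_int[OF this a(1)] a(2) show False by simp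
        qed
      qed
    qed
    have sub: "f ` {r \<in> {0..<int p}. int p dvd (\<Prod>j<k. G * r + (s + b j))}
        \<subseteq> {r \<in> {0..<int p}. int p dvd (\<Prod>j<k. 1 * r + b j)}"
    proof
      fix y assume "y \<in> f ` {r \<in> {0..<int p}. int p dvd (\<Prod>j<k. G * r + (s + b j))}"
      then obtain x where x: "y = f x" "int p dvd (\<Prod>j<k. G * x + (s + b j))" by auto
      then obtain j where j: "j < k" "int p dvd G * x + (s + b j)"
        using prime_dvd_prod_iff[OF finite_lessThan pi] by auto
      have "(G * x + s + b j) mod int p = (f x + b j) mod int p"
        unfolding f_def by (simp add: mod_add_left_eq)
      then have "int p dvd y + b j" using j x(1)
        by (metis add.assoc dvd_eq_mod_eq_0)
      then have "int p dvd (\<Prod>j<k. 1 * y + b j)"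
        using j(1) prime_dvd_prod_iff[OF finite_lessThan pi] by auto
      moreover have "y \<in> {0..<int p}" using x(1) f_def p prime_gt_0_nat by auto
      ultimately show "y \<in> {r \<in> {0..<int p}. int p dvd (\<Prod>j<k. 1 * r + b j)}" by simp
    qed
    have "card {r \<in> {0..<int p}. int p dvd (\<Prod>j<k. G * r + (s + b j))}
        = card (f ` {r \<in> {0..<int p}. int p dvd (\<Prod>j<k. G * r + (s + b j))})"
      by (rule card_image[symmetric]) (rule inj_on_subset[OF inj], auto)
    also have "\<dots> \<le> card {r \<in> {0..<int p}. int p dvd (\<Prod>j<k. 1 * r + b j)}"
      by (rule card_mono[OF _ sub]) (rule finite_subset[of _ "{0..<int p}"], auto)
    also have "\<dots> < p" using adm p unfolding admissible_def by blast
    finally show ?thesis .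
  qed
qed

theorem theorem1:
  fixes m km k :: nat and b :: "nat \<Rightarrow> int" and g :: int
  assumes "m \<ge> 2"
    and "km_property m km"
    and "k \<ge> km"
    and "inj_on b {..<k}"
    and "admissible k (\<lambda>_. 1) b"
    and "g > 0"
    and "coprime g (\<Prod>j<k. b j)"
  shows "\<exists>H. H \<subseteq> b ` {..<k} \<and> card H = m \<and>
           infinite {n::nat. consecutive_primes ((\<lambda>h. g * int n + h) ` H)}"
proof -
  note m2 = assms(1) and kmp = assms(2) and kk = assms(3) and injb = assms(4)
    and adm = assms(5) and gpos = assms(6) and cop = assms(7)
  define bs where "bs = b ` {..<k}"
  have finbs: "finite bs" unfolding bs_def by simp
  define lo where "lo = Min bs"
  define hi where "hi = Max bs"
  have lohi: "\<And>x. x \<in> bs \<Longrightarrow> lo \<le> x \<and> x \<le> hi"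
    unfolding lo_def hi_def using finbs by auto
  define B :: nat where "B = nat g + nat (hi - lo)"
  define S where "S = {p::nat. prime p \<and> B < p}"
  have infS: "infinite S"
  proof
    assume "finite S"
    then have "finite (S \<union> {..B})" by simp
    moreover have "{p::nat. prime p} \<subseteq> S \<union> {..B}" unfolding S_def by auto
    ultimately show False using primes_infinite finite_subset by blast
  qed
  define I where "I = {lo..hi} - bs"
  have finI: "finite I" unfolding I_def by simp
  define pc where "pc c = enumerate S (nat (c - lo))" for c
  have pcS: "\<And>c. prime (pc c) \<and> B < pc c"
    using enumerate_in_set[OF infS] unfolding pc_def S_def by blast
  have injpc: "inj_on pc I"
  proof
    fix c d assume cd: "c \<in> I" "d \<in> I" "pc c = pc d"
    then have "nat (c - lo) = nat (d - lo)" unfolding pc_def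
      using enumerate_mono_iff[OF infS] by (metis nat_neq_iff)
    then show "c = d" using cd(1,2) unfolding I_def by auto
  qed
  define M :: int where "M = (\<Prod>c\<in>I. int (pc c))"
  have Mpos: "M > 0" unfolding M_def using pcS prime_gt_0_nat
    by (intro prod_pos) auto
  have pcM: "\<And>c. c \<in> I \<Longrightarrow> int (pc c) dvd M"
    unfolding M_def by (rule dvd_prodI[OF finI])
  have copI: "\<forall>i\<in>I. \<forall>j\<in>I. i \<noteq> j \<longrightarrow> coprime (pc i) (pc j)"
    using injpc pcS primes_coprime unfolding inj_on_def by metis
  obtain x :: nat where x: "\<forall>c\<in>I. [x = nat ((- c) mod int (pc c))] (mod pc c)"
    using chinese_remainder_nat[OF finI copI, of "\<lambda>c. nat ((- c) mod int (pc c))"] by blast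
  have xdvd: "int (pc c) dvd int x + c" if c: "c \<in> I" for c
  proof -
    have pp: "int (pc c) > 0" using pcS prime_gt_0_nat by simp
    have "[int x = int (nat ((- c) mod int (pc c)))] (mod int (pc c))"
      using x c cong_int_iff by blast
    then have "[int x = (- c) mod int (pc c)] (mod int (pc c))"
      using pp by simp
    then have "[int x = - c] (mod int (pc c))"
      by (simp add: cong_def)
    then show ?thesis by (simp add: cong_iff_dvd_diff)
  qed
  have cgM: "coprime g M"
    unfolding M_def
  proof (rule prod_coprime_right)
    fix c assume "c \<in> I"
    have pr: "prime (int (pc c))" using pcS by simp
    have "int (pc c) > g" using pcS[of c] unfolding B_def by linarith
    then have "\<not> int (pc c) dvd g" using gpos
      by (meson zdvd_imp_le not_le)
    then show "coprime g (int (pc c))"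
      using prime_imp_coprime[OF pr] by (simp add: ac_simps)
  qed
  obtain u where u: "[g * u = 1] (mod M)"
    using cong_solve_coprime_int[OF cgM] by blast
  define r where "r = (u * int x) mod M"
  have r0: "r \<ge> 0" unfolding r_def using Mpos by simp
  have gr: "[g * r = int x] (mod M)"
  proof -
    have "[g * r = g * (u * int x)] (mod M)" unfolding r_def
      by (simp add: cong_def mod_mult_right_eq)
    moreover have "[g * (u * int x) = 1 * int x] (mod M)"
      using cong_mult[OF u cong_refl[of "int x"]] by (simp add: ac_simps)
    ultimately show ?thesis by (metis cong_trans mult_1)
  qed
  have grc: "int (pc c) dvd g * r + c" if c: "c \<in> I" for c
  proof -
    have "int (pc c) dvd g * r - int x"
      using gr pcM[OF c] by (meson cong_iff_dvd_diff dvd_trans)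
    then have "int (pc c) dvd (g * r - int x) + (int x + c)"
      using xdvd[OF c] by (rule dvd_add)
    then show ?thesis by simp
  qed
  define G where "G = g * M"
  define H where "H j = g * r + b j" for j
  have Gpos: "G > 0" unfolding G_def using gpos Mpos by simp
  have admH: "admissible k (\<lambda>_. G) H"
    unfolding H_def
  proof (rule adm_shift[OF adm])
    fix p :: nat assume p: "prime p" and pG: "int p dvd G"
    have pi: "prime (int p)" using p by simp
    show "\<not> int p dvd (\<Prod>j<k. g * r + b j)"
    proof
      assume "int p dvd (\<Prod>j<k. g * r + b j)"
      then obtain j where j: "j < k" "int p dvd g * r + b j"
        using prime_dvd_prod_iff[OF finite_lessThan pi] by auto
      from pG pi have "int p dvd g \<or> int p dvd M"
        unfolding G_def using prime_dvd_mult_iff by blast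
      then show False
      proof
        assume pg: "int p dvd g"
        then have "int p dvd b j" using j(2)
          by (metis dvd_add_right_iff dvd_mult2)
        then have "int p dvd (\<Prod>j<k. b j)" using j(1)
          using prime_dvd_prod_iff[OF finite_lessThan pi] by auto
        then have "int p dvd gcd g (\<Prod>j<k. b j)" using pg by simp
        then show False using cop pi by (simp add: not_prime_unit)
      next
        assume "int p dvd M"
        then obtain c where c: "c \<in> I" "int p dvd int (pc c)"
          unfolding M_def using prime_dvd_prod_iff[OF finI pi] by auto
        then have pe: "p = pc c" using p pcS
          by (metis int_dvd_int_iff primes_dvd_imp_eq)
        have "int p dvd (g * r + b j) - (g * r + c)"
          using j(2) grc[OF c(1)] pe by (metis dvd_diff)
        then have d: "int p dvd b j - c" by simp
        have bj: "b j \<in> bs" using j(1) unfolding bs_def by simp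
        have "c \<in> {lo..hi}" "c \<notin> bs" using c(1) unfolding I_def by auto
        then have ne: "b j - c \<noteq> 0" and ab: "\<bar>b j - c\<bar> \<le> hi - lo"
          using bj lohi[OF bj] by auto
        have "int p > hi - lo" using pcS[of c] pe unfolding B_def by linarith
        then show False using dvd_imp_le_int[OF ne d] ab by simp
      qed
    qed
  qed
  have disc: "(\<Prod>i<k. \<Prod>j\<in>{i<..<k}. G * H j - G * H i) \<noteq> 0"
  proof -
    have "G * H j - G * H i \<noteq> 0" if "i < k" "j \<in> {i<..<k}" for i j
    proof -
      have "b j \<noteq> b i" using injb that unfolding inj_on_def by fastforce
      then show ?thesis using Gpos unfolding H_def by (simp add: right_diff_distrib[symmetric])
    qed
    then show ?thesis by (simp add: prod_zero_iff)
  qed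
  have infT: "infinite {t::nat. m \<le> card (prime_values k (\<lambda>_. G) H t)}"
    using kmp kk admH Gpos disc unfolding km_property_def by blast
  define T where "T = {t::nat. m \<le> card (prime_values k (\<lambda>_. G) H t)}"
  define E where "E = {t::nat. \<exists>c\<in>I. int t \<le> int (pc c) - c}"
  have finE: "finite E"
  proof -
    have "E \<subseteq> (\<Union>c\<in>I. {..nat (int (pc c) - c)})" unfolding E_def by auto
    then show ?thesis using finI finite_subset by blast
  qed
  define T' where "T' = T - E"
  have infT': "infinite T'" unfolding T'_def T_def using infT finE by simp
  define nt where "nt t = nat (M * int t + r)" for t :: nat
  have nt_int: "int (nt t) = M * int t + r" for t unfolding nt_def using Mpos r0 by simp
  have injnt: "inj nt"
  proof
    fix s t assume "nt s = nt t"
    then have "M * int s + r = M * int t + r" using nt_int by metis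
    then show "s = t" using Mpos by simp
  qed
  define P where "P t = {c \<in> bs. prime (g * int (nt t) + c)}" for t
  define HH where "HH t = set (take m (sorted_list_of_set (P t)))" for t
  have key: "HH t \<subseteq> bs \<and> card (HH t) = m \<and>
     consecutive_primes ((\<lambda>h. g * int (nt t) + h) ` HH t)" if t: "t \<in> T'" for t
  proof -
    let ?n = "nt t"
    have finP: "finite (P t)" unfolding P_def using finbs by simp
    have pv: "prime_values k (\<lambda>_. G) H t = (\<lambda>c. g * int ?n + c) ` P t"
    proof -
      have eq: "G * int t + H j = g * int ?n + b j" for j
        unfolding G_def H_def nt_int by (simp add: algebra_simps)
      show ?thesis unfolding prime_values_def P_def bs_def eq by auto
    qed
    have "m \<le> card (prime_values k (\<lambda>_. G) H t)" using t unfolding T'_def T_def by simp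
    then have "m \<le> card ((\<lambda>c. g * int ?n + c) ` P t)" by (simp only: pv)
    then have "m \<le> card (P t)"
      using card_image_le[OF finP, of "\<lambda>c. g * int ?n + c"] by linarith
    define xs where "xs = sorted_list_of_set (P t)"
    have sxs: "sorted_wrt (<) xs" "distinct xs" "set xs = P t" "length xs = card (P t)"
      unfolding xs_def using finP by auto
    have cardH: "card (HH t) = m"
      unfolding HH_def xs_def[symmetric] using sxs \<open>m \<le> card (P t)\<close>
      by (simp add: distinct_card)
    have HP: "HH t \<subseteq> P t" unfolding HH_def xs_def[symmetric]
      using sxs(3) set_take_subset by metis
    have HB: "HH t \<subseteq> bs" using HP unfolding P_def by auto
    have finH: "finite (HH t)" unfolding HH_def by simp
    have neH: "HH t \<noteq> {}" using cardH m2 by auto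
    let ?V = "(\<lambda>h. g * int ?n + h) ` HH t"
    have allp: "\<forall>v\<in>?V. prime v" using HP unfolding P_def by auto
    have between: "q \<in> ?V" if q: "prime q" "Min ?V \<le> q" "q \<le> Max ?V" for q
    proof -
      have "Min ?V \<in> ?V" "Max ?V \<in> ?V" using finH neH by auto
      then obtain h1 h2 where h: "h1 \<in> HH t" "h2 \<in> HH t"
        "Min ?V = g * int ?n + h1" "Max ?V = g * int ?n + h2" by auto
      define c where "c = q - g * int ?n"
      have qc: "q = g * int ?n + c" unfolding c_def by simp
      have "h1 \<le> c" "c \<le> h2" using q h unfolding c_def by auto
      then have clh: "lo \<le> c" "c \<le> hi" using lohi h(1,2) HB by force+
      show ?thesis
      proof (cases "c \<in> bs")
        case True
        then have cP: "c \<in> P t" unfolding P_def using q(1) qc by simp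
        have "c \<in> HH t" unfolding HH_def xs_def[symmetric]
          using take_sorted_closed[OF sxs(1)] cP sxs(3) h(2) \<open>c \<le> h2\<close>
          unfolding HH_def xs_def[symmetric] by blast
        then show ?thesis using qc by simp
      next
        case False
        then have cI: "c \<in> I" unfolding I_def using clh by simp
        have "int (pc c) dvd g * int ?n + c"
        proof -
          have "g * int ?n + c = (g * M) * int t + (g * r + c)"
            unfolding nt_int by (simp add: algebra_simps)
          moreover have "int (pc c) dvd (g * M) * int t" using pcM[OF cI] by simp
          ultimately show ?thesis using grc[OF cI] by (metis dvd_add)
        qed
        then have "int (pc c) = q" using qc q(1) pcS[of c]
          by (metis prime_nat_int_transfer primes_dvd_imp_eq)
        moreover have "int t > int (pc c) - c" using t cI unfolding T'_def E_def by auto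
        moreover have "int ?n \<ge> int t" unfolding nt_int using Mpos r0
        proof -
          have "1 * int t \<le> M * int t" using Mpos by (intro mult_right_mono) auto
          then show "int t \<le> M * int t + r" using r0 by linarith
        qed
        moreover have "g * int ?n \<ge> 1 * int ?n" using gpos by (intro mult_right_mono) auto
        ultimately show ?thesis using qc by linarith
      qed
    qed
    show ?thesis using HB cardH allp between unfolding consecutive_primes_def by blast
  qed
  have "finite (HH ` T')"
    by (rule finite_subset[of _ "Pow bs"]) (use key finbs in auto)
  then obtain t0 where t0: "t0 \<in> T'" "infinite {t \<in> T'. HH t = HH t0}"
    using pigeonhole_infinite[OF infT'] by blast
  have "infinite (nt ` {t \<in> T'. HH t = HH t0})"
    using t0(2) finite_imageD injnt inj_on_subset by blast
  moreover have "nt ` {t \<in> T'. HH t = HH t0} \<subseteq>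
      {n::nat. consecutive_primes ((\<lambda>h. g * int n + h) ` HH t0)}"
  proof
    fix n assume "n \<in> nt ` {t \<in> T'. HH t = HH t0}"
    then obtain t where tt: "t \<in> T'" "HH t = HH t0" "n = nt t" by blast
    show "n \<in> {n::nat. consecutive_primes ((\<lambda>h. g * int n + h) ` HH t0)}"
      using key[OF tt(1)] tt(2,3) by simp
  qed
  ultimately have "infinite {n::nat. consecutive_primes ((\<lambda>h. g * int n + h) ` HH t0)}"
    using finite_subset by blast
  then show ?thesis using key[OF t0(1)] unfolding bs_def by blast
qed
end
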